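(* A finite idempotent algebra $\mathbf{A}$ lies in a congruence distributive variety (equivalently, $\mathbf{A}$ has directed Jónsson terms) if and only if $\{a\}$ Jónsson absorbs $\mathbf{A}$ for every $a\in A$.
   Context: Directed Jónsson terms: ternary terms $d_0,\dots,d_n$ with $d_0(x,y,z)=x$, $d_n(x,y,z)=z$, $d_i(x,y,y)=d_{i+1}(x,x,y)$ for $i<n$, and $d_i(x,y,x)=x$ for all $i$. Jónsson absorption: a subuniverse $B$ of $\mathbf{A}$ Jónsson absorbs $\mathbf{A}$ if there are ternary terms $d_0,\dots,d_n$ of $\mathbf{A}$ such that $d_i(b,a,b')\in B$ for all $i$, all $b,b'\in B$, $a\in A$; $d_i(x,y,y)=d_{i+1}(x,x,y)$ for all $i<n$ and all $x,y\in A$; $d_0(x,y,z)=x$ and $d_n(x,y,z)=z$ for all $x,y,z\in A$. An algebra is idempotent if every basic operation $f$ satisfies $f(x,\dots,x)\approx x$. *)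

theory Defs
  imports Main
begin

definition is_algebra :: "'a set \<Rightarrow> ('s \<Rightarrow> nat) \<Rightarrow> ('s \<Rightarrow> 'a list \<Rightarrow> 'a) \<Rightarrow> bool" where
  "is_algebra A ar ops \<longleftrightarrow>
     (\<forall>f xs. length xs = ar f \<and> set xs \<subseteq> A \<longrightarrow> ops f xs \<in> A)"

definition idempotent_alg :: "'a set \<Rightarrow> ('s \<Rightarrow> nat) \<Rightarrow> ('s \<Rightarrow> 'a list \<Rightarrow> 'a) \<Rightarrow> bool" where
  "idempotent_alg A ar ops \<longleftrightarrow> (\<forall>f. \<forall>x\<in>A. ops f (replicate (ar f) x) = x)"

definition subuniverse :: "'a set \<Rightarrow> ('s \<Rightarrow> nat) \<Rightarrow> ('s \<Rightarrow> 'a list \<Rightarrow> 'a) \<Rightarrow> 'a set \<Rightarrow> bool" where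
  "subuniverse A ar ops B \<longleftrightarrow> B \<subseteq> A \<and>
     (\<forall>f xs. length xs = ar f \<and> set xs \<subseteq> B \<longrightarrow> ops f xs \<in> B)"

datatype 's trm = Var nat | Op 's "'s trm list"

fun wf_trm :: "('s \<Rightarrow> nat) \<Rightarrow> nat \<Rightarrow> 's trm \<Rightarrow> bool" where
  "wf_trm ar k (Var i) = (i < k)"
| "wf_trm ar k (Op f ts) = (length ts = ar f \<and> (\<forall>t\<in>set ts. wf_trm ar k t))"

fun eval_trm :: "('s \<Rightarrow> 'a list \<Rightarrow> 'a) \<Rightarrow> (nat \<Rightarrow> 'a) \<Rightarrow> 's trm \<Rightarrow> 'a" where
  "eval_trm ops env (Var i) = env i"
| "eval_trm ops env (Op f ts) = ops f (map (eval_trm ops env) ts)"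

definition top3 :: "('s \<Rightarrow> 'a list \<Rightarrow> 'a) \<Rightarrow> 's trm \<Rightarrow> 'a \<Rightarrow> 'a \<Rightarrow> 'a \<Rightarrow> 'a" where
  "top3 ops t x y z = eval_trm ops (\<lambda>i. [x, y, z] ! i) t"

definition directed_chain ::
  "'a set \<Rightarrow> ('s \<Rightarrow> nat) \<Rightarrow> ('s \<Rightarrow> 'a list \<Rightarrow> 'a) \<Rightarrow> (nat \<Rightarrow> 's trm) \<Rightarrow> nat \<Rightarrow> bool" where
  "directed_chain A ar ops d n \<longleftrightarrow>
     (\<forall>i\<le>n. wf_trm ar 3 (d i)) \<and>
     (\<forall>x\<in>A. \<forall>y\<in>A. \<forall>z\<in>A. top3 ops (d 0) x y z = x \<and> top3 ops (d n) x y z = z) \<and>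
     (\<forall>i<n. \<forall>x\<in>A. \<forall>y\<in>A. top3 ops (d i) x y y = top3 ops (d (Suc i)) x x y)"

definition has_directed_jonsson_terms ::
  "'a set \<Rightarrow> ('s \<Rightarrow> nat) \<Rightarrow> ('s \<Rightarrow> 'a list \<Rightarrow> 'a) \<Rightarrow> bool" where
  "has_directed_jonsson_terms A ar ops \<longleftrightarrow>
     (\<exists>d n. directed_chain A ar ops d n \<and>
        (\<forall>i\<le>n. \<forall>x\<in>A. \<forall>y\<in>A. top3 ops (d i) x y x = x))"

definition jonsson_absorbs ::
  "'a set \<Rightarrow> ('s \<Rightarrow> nat) \<Rightarrow> ('s \<Rightarrow> 'a list \<Rightarrow> 'a) \<Rightarrow> 'a set \<Rightarrow> bool" where
  "jonsson_absorbs A ar ops B \<longleftrightarrow> subuniverse A ar ops B \<and>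
     (\<exists>d n. directed_chain A ar ops d n \<and>
        (\<forall>i\<le>n. \<forall>b\<in>B. \<forall>b'\<in>B. \<forall>a\<in>A. top3 ops (d i) b a b' \<in> B))"

end

theory Submission
  imports Defs
begin

fun substt :: "(nat \<Rightarrow> 's trm) \<Rightarrow> 's trm \<Rightarrow> 's trm" where
  "substt \<sigma> (Var i) = \<sigma> i"
| "substt \<sigma> (Op f ts) = Op f (map (substt \<sigma>) ts)"

lemma eval_substt: "eval_trm ops env (substt \<sigma> t) = eval_trm ops (\<lambda>v. eval_trm ops env (\<sigma> v)) t"
  by (induction t) (auto cong: map_cong)

lemma wf_substt: "wf_trm ar k t \<Longrightarrow> (\<forall>v<k. wf_trm ar k' (\<sigma> v)) \<Longrightarrow> wf_trm ar k' (substt \<sigma> t)"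
  by (induction t) auto

lemma eval_cong: "wf_trm ar k t \<Longrightarrow> (\<forall>i<k. env i = env' i) \<Longrightarrow> eval_trm ops env t = eval_trm ops env' t"
  by (induction t) (auto cong: map_cong)

lemma eval_closed: "is_algebra A ar ops \<Longrightarrow> wf_trm ar k t \<Longrightarrow> (\<forall>i<k. env i \<in> A) \<Longrightarrow> eval_trm ops env t \<in> A"
proof (induction t)
  case (Var x) then show ?case by simp
next
  case (Op f ts)
  then have "set (map (eval_trm ops env) ts) \<subseteq> A" by auto
  moreover have "length (map (eval_trm ops env) ts) = ar f" using Op.prems by simp
  ultimately show ?case using Op.prems(1) unfolding is_algebra_def by simp
qed

lemma eval_idem: "idempotent_alg A ar ops \<Longrightarrow> wf_trm ar k t \<Longrightarrow> x \<in> A \<Longrightarrow> (\<forall>i<k. env i = x) \<Longrightarrow> eval_trm ops env t = x"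
proof (induction t)
  case (Var x) then show ?case by simp
next
  case (Op f ts)
  then have "map (eval_trm ops env) ts = replicate (ar f) x"
    by (auto intro: replicate_eqI)
  then show ?case using Op.prems unfolding idempotent_alg_def by simp
qed

lemma top3_closed: "is_algebra A ar ops \<Longrightarrow> wf_trm ar 3 t \<Longrightarrow> x \<in> A \<Longrightarrow> y \<in> A \<Longrightarrow> z \<in> A \<Longrightarrow> top3 ops t x y z \<in> A"
  unfolding top3_def by (rule eval_closed) (auto simp: less_Suc_eq numeral_3_eq_3)

lemma top3_idem: "idempotent_alg A ar ops \<Longrightarrow> wf_trm ar 3 t \<Longrightarrow> x \<in> A \<Longrightarrow> top3 ops t x x x = x"
  unfolding top3_def by (rule eval_idem) (auto simp: less_Suc_eq numeral_3_eq_3)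

definition comp_trm :: "(nat \<Rightarrow> 's trm) \<Rightarrow> (nat \<Rightarrow> 's trm) \<Rightarrow> nat \<Rightarrow> nat \<Rightarrow> 's trm" where
  "comp_trm d e m k = substt (\<lambda>v. if v = 0 then Var 0 else if v = 1 then e (k mod Suc m) else Var 2) (d (k div Suc m))"

lemma comp_wf:
  assumes "wf_trm ar 3 (d (k div Suc m))" "wf_trm ar 3 (e (k mod Suc m))"
  shows "wf_trm ar 3 (comp_trm d e m k)"
  unfolding comp_trm_def using assms by (intro wf_substt) auto

lemma comp_eval:
  assumes "wf_trm ar 3 (d (k div Suc m))"
  shows "top3 ops (comp_trm d e m k) x y z = top3 ops (d (k div Suc m)) x (top3 ops (e (k mod Suc m)) x y z) z"
  unfolding comp_trm_def top3_def eval_substt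
  by (rule eval_cong[OF assms]) (auto simp: less_Suc_eq numeral_3_eq_3)

lemma divmod_aux: "(r::nat) < M \<Longrightarrow> (i*M + r) div M = i \<and> (i*M + r) mod M = r"
proof -
  assume r: "r < M"
  then have M: "M > 0" by simp
  have "(r + i*M) div M = r div M + i" using div_mult_self1[of M r i] M by simp
  moreover have "(r + i*M) mod M = r mod M" by simp
  ultimately show ?thesis using r by (simp add: add.commute)
qed

lemma compose:
  assumes alg: "is_algebra A ar ops" and idem: "idempotent_alg A ar ops"
    and D: "directed_chain A ar ops d n" and E: "directed_chain A ar ops e m"
  shows "directed_chain A ar ops (comp_trm d e m) (n * Suc m + m) \<and>
    (\<forall>x\<in>A. ((\<forall>y\<in>A. \<forall>i\<le>n. top3 ops (d i) x y x = x) \<or> (\<forall>y\<in>A. \<forall>i\<le>m. top3 ops (e i) x y x = x))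
       \<longrightarrow> (\<forall>y\<in>A. \<forall>k\<le>n * Suc m + m. top3 ops (comp_trm d e m k) x y x = x))"
proof -
  let ?M = "Suc m" and ?N = "n * Suc m + m"
  have dwf: "\<And>i. i \<le> n \<Longrightarrow> wf_trm ar 3 (d i)" and ewf: "\<And>i. i \<le> m \<Longrightarrow> wf_trm ar 3 (e i)"
    using D E unfolding directed_chain_def by auto
  have jle: "\<And>k. k mod ?M \<le> m" using less_Suc_eq_le mod_less_divisor zero_less_Suc by blast
  have ile: "\<And>k. k \<le> ?N \<Longrightarrow> k div ?M \<le> n"
  proof -
    fix k assume "k \<le> ?N"
    then have "k < Suc n * ?M" by simp
    then show "k div ?M \<le> n"
      by (metis less_Suc_eq_le less_mult_imp_div_less)
  qed
  have wf: "wf_trm ar 3 (comp_trm d e m k)" if "k \<le> ?N" for k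
    by (rule comp_wf[where d=d and e=e and m=m and k=k, OF dwf[OF ile[OF that]] ewf[OF jle[of k]]])
  have ev: "top3 ops (comp_trm d e m k) x y z = top3 ops (d (k div ?M)) x (top3 ops (e (k mod ?M)) x y z) z" if "k \<le> ?N" for k x y z
    by (rule comp_eval[where d=d and e=e and m=m and k=k, OF dwf[OF ile[OF that]]])
  have d0: "\<And>x y z. x\<in>A \<Longrightarrow> y\<in>A \<Longrightarrow> z\<in>A \<Longrightarrow> top3 ops (d 0) x y z = x"
   and dn: "\<And>x y z. x\<in>A \<Longrightarrow> y\<in>A \<Longrightarrow> z\<in>A \<Longrightarrow> top3 ops (d n) x y z = z"
   and dc: "\<And>i x y. i < n \<Longrightarrow> x\<in>A \<Longrightarrow> y\<in>A \<Longrightarrow> top3 ops (d i) x y y = top3 ops (d (Suc i)) x x y"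
    using D unfolding directed_chain_def by auto
  have e0: "\<And>x y z. x\<in>A \<Longrightarrow> y\<in>A \<Longrightarrow> z\<in>A \<Longrightarrow> top3 ops (e 0) x y z = x"
   and em: "\<And>x y z. x\<in>A \<Longrightarrow> y\<in>A \<Longrightarrow> z\<in>A \<Longrightarrow> top3 ops (e m) x y z = z"
   and ec: "\<And>i x y. i < m \<Longrightarrow> x\<in>A \<Longrightarrow> y\<in>A \<Longrightarrow> top3 ops (e i) x y y = top3 ops (e (Suc i)) x x y"
    using E unfolding directed_chain_def by auto
  have ecl: "top3 ops (e (k mod ?M)) x y z \<in> A" if "x\<in>A" "y\<in>A" "z\<in>A" for k x y z
    by (rule top3_closed[OF alg ewf[OF jle[of k]] that])
  have c1: "\<forall>x\<in>A. \<forall>y\<in>A. \<forall>z\<in>A. top3 ops (comp_trm d e m 0) x y z = x \<and> top3 ops (comp_trm d e m ?N) x y z = z"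
  proof (intro ballI conjI)
    fix x y z assume xyz: "x\<in>A" "y\<in>A" "z\<in>A"
    show "top3 ops (comp_trm d e m 0) x y z = x"
      using ev[of 0] d0 ecl[of x y z 0] xyz by simp
    have "?N div ?M = n" "?N mod ?M = m" using divmod_aux[of m ?M n] by auto
    then show "top3 ops (comp_trm d e m ?N) x y z = z"
      using ev[of ?N x y z] dn em xyz ewf by (simp add: top3_closed[OF alg])
  qed
  have c2: "\<forall>k<?N. \<forall>x\<in>A. \<forall>y\<in>A. top3 ops (comp_trm d e m k) x y y = top3 ops (comp_trm d e m (Suc k)) x x y"
  proof (intro allI impI ballI)
    fix k x y assume k: "k < ?N" and xy: "x\<in>A" "y\<in>A"
    define i where "i = k div ?M"
    define j where "j = k mod ?M"
    have kij: "k = i * ?M + j" unfolding i_def j_def by (rule div_mult_mod_eq[symmetric])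
    have j: "j \<le> m" unfolding j_def using jle by blast
    have i: "i \<le> n" unfolding i_def using ile k by simp
    show "top3 ops (comp_trm d e m k) x y y = top3 ops (comp_trm d e m (Suc k)) x x y"
    proof (cases "j < m")
      case True
      have "Suc k = i * ?M + Suc j" using kij by simp
      then have s: "Suc k div ?M = i" "Suc k mod ?M = Suc j" using divmod_aux[of "Suc j" ?M i] True by auto
      show ?thesis using ev[of k] ev[of "Suc k"] k s ec[OF True xy] unfolding i_def[symmetric] j_def[symmetric]
        by simp
    next
      case False
      then have jm: "j = m" using j by simp
      have "Suc k = Suc i * ?M + 0" using kij jm by simp
      then have s: "Suc k div ?M = Suc i" "Suc k mod ?M = 0" using divmod_aux[of 0 ?M "Suc i"] by auto
      have iN: "i < n"
      proof (rule ccontr)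
        assume "\<not> i < n" then have "i = n" using i by simp
        then have "k = ?N" using kij jm by simp
        then show False using k by simp
      qed
      have "top3 ops (comp_trm d e m k) x y y = top3 ops (d i) x y y"
        using ev[of k] k em[OF xy(1) xy(2) xy(2)] unfolding i_def[symmetric] j_def[symmetric] jm by simp
      also have "\<dots> = top3 ops (d (Suc i)) x x y" using dc[OF iN xy] .
      also have "\<dots> = top3 ops (comp_trm d e m (Suc k)) x x y"
        using ev[of "Suc k"] k s e0[OF xy(1) xy(1) xy(2)] by simp
      finally show ?thesis .
    qed
  qed
  have c3: "\<forall>x\<in>A. ((\<forall>y\<in>A. \<forall>i\<le>n. top3 ops (d i) x y x = x) \<or> (\<forall>y\<in>A. \<forall>i\<le>m. top3 ops (e i) x y x = x))
       \<longrightarrow> (\<forall>y\<in>A. \<forall>k\<le>?N. top3 ops (comp_trm d e m k) x y x = x)"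
  proof (intro ballI impI allI)
    fix x y k assume x: "x\<in>A" and P: "(\<forall>y\<in>A. \<forall>i\<le>n. top3 ops (d i) x y x = x) \<or> (\<forall>y\<in>A. \<forall>i\<le>m. top3 ops (e i) x y x = x)"
      and y: "y\<in>A" and k: "k \<le> ?N"
    show "top3 ops (comp_trm d e m k) x y x = x"
      using P
    proof
      assume "\<forall>y\<in>A. \<forall>i\<le>n. top3 ops (d i) x y x = x"
      then show ?thesis using ev[OF k] ecl[OF x y x, of k] ile[OF k] by simp
    next
      assume "\<forall>y\<in>A. \<forall>i\<le>m. top3 ops (e i) x y x = x"
      then show ?thesis using ev[OF k] jle[of k] y top3_idem[OF idem dwf[OF ile[OF k]] x] by simp
    qed
  qed
  have "directed_chain A ar ops (comp_trm d e m) ?N"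
    unfolding directed_chain_def using c1 c2 wf by (intro conjI allI impI) auto
  then show ?thesis using c3 by (rule conjI)
qed

theorem corollary2p4:
  fixes A :: "'a set" and ar :: "'s \<Rightarrow> nat" and ops :: "'s \<Rightarrow> 'a list \<Rightarrow> 'a"
  assumes "is_algebra A ar ops" and "A \<noteq> {}" and "finite A" and "idempotent_alg A ar ops"
  shows "has_directed_jonsson_terms A ar ops \<longleftrightarrow> (\<forall>a\<in>A. jonsson_absorbs A ar ops {a})"
proof
  assume H: "has_directed_jonsson_terms A ar ops"
  then obtain d n where D: "directed_chain A ar ops d n"
    and J: "\<forall>i\<le>n. \<forall>x\<in>A. \<forall>y\<in>A. top3 ops (d i) x y x = x"
    unfolding has_directed_jonsson_terms_def by blast
  show "\<forall>a\<in>A. jonsson_absorbs A ar ops {a}"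
  proof
    fix a assume a: "a \<in> A"
    have sub: "subuniverse A ar ops {a}"
      unfolding subuniverse_def
    proof (intro conjI allI impI)
      fix f xs assume "length xs = ar f \<and> set xs \<subseteq> {a}"
      then have "xs = replicate (ar f) a" by (auto intro: replicate_eqI)
      then show "ops f xs \<in> {a}" using assms(4) a unfolding idempotent_alg_def by simp
    qed (use a in auto)
    have "\<forall>i\<le>n. \<forall>b\<in>{a}. \<forall>b'\<in>{a}. \<forall>x\<in>A. top3 ops (d i) b x b' \<in> {a}"
      using J a by simp
    then show "jonsson_absorbs A ar ops {a}"
      unfolding jonsson_absorbs_def using sub D by blast
  qed
next
  assume H: "\<forall>a\<in>A. jonsson_absorbs A ar ops {a}"
  have key: "finite S \<Longrightarrow> S \<subseteq> A \<Longrightarrow> \<exists>d n. directed_chain A ar ops d n \<and> (\<forall>x\<in>S. \<forall>y\<in>A. \<forall>i\<le>n. top3 ops (d i) x y x = x)" for S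
  proof (induction S rule: finite_induct)
    case empty
    obtain a where "a \<in> A" using assms(2) by blast
    then have "jonsson_absorbs A ar ops {a}" using H by blast
    then obtain d n where "directed_chain A ar ops d n" unfolding jonsson_absorbs_def by blast
    then show ?case by blast
  next
    case (insert a S)
    then have "S \<subseteq> A" by simp
    then obtain d n where D: "directed_chain A ar ops d n" and PD: "\<forall>x\<in>S. \<forall>y\<in>A. \<forall>i\<le>n. top3 ops (d i) x y x = x"
      using insert.IH by blast
    from insert have aA: "a \<in> A" by simp
    then have "jonsson_absorbs A ar ops {a}" using H by blast
    then obtain e m where E: "directed_chain A ar ops e m" and PE: "\<forall>i\<le>m. \<forall>b\<in>{a}. \<forall>b'\<in>{a}. \<forall>a'\<in>A. top3 ops (e i) b a' b' \<in> {a}"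
      unfolding jonsson_absorbs_def by blast
    have PEa: "\<forall>y\<in>A. \<forall>i\<le>m. top3 ops (e i) a y a = a" using PE by simp
    note C = compose[OF assms(1) assms(4) D E]
    note C1 = conjunct1[OF C]
    note C2 = conjunct2[OF C]
    have "\<forall>x\<in>insert a S. \<forall>y\<in>A. \<forall>k\<le>n * Suc m + m. top3 ops (comp_trm d e m k) x y x = x"
    proof
      fix x assume x: "x \<in> insert a S"
      then have xA: "x \<in> A" using insert.prems by blast
      have "(\<forall>y\<in>A. \<forall>i\<le>n. top3 ops (d i) x y x = x) \<or> (\<forall>y\<in>A. \<forall>i\<le>m. top3 ops (e i) x y x = x)"
        using x PD PEa by auto
      with bspec[OF C2 xA] show "\<forall>y\<in>A. \<forall>k\<le>n * Suc m + m. top3 ops (comp_trm d e m k) x y x = x"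
        by (rule mp)
    qed
    with C1 show ?case by blast
  qed
  obtain d n where "directed_chain A ar ops d n" and "\<forall>x\<in>A. \<forall>y\<in>A. \<forall>i\<le>n. top3 ops (d i) x y x = x"
    using key[OF assms(3)] by blast
  then show "has_directed_jonsson_terms A ar ops"
    unfolding has_directed_jonsson_terms_def by blast
qed

end
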